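(* Let $X$ be an infinite compact metrizable space, $h\colon X\to X$ a minimal homeomorphism, and suppose $(X,h)$ has the topological small boundary property. Let $\varepsilon>0$. Then for any closed set $F\subset X$ and any open set $U\subset X$ with $F\subset U$, there exist a closed set $K\subset X$ and an open set $V\subset X$ such that (1) $F\subset\mathrm{int}(K)\subset K\subset V\subset\overline{V}\subset U$; (2) $\partial K$ and $\partial V$ are topologically $h$-small; (3) $\mu(V\setminus K)<\varepsilon$ for all $\mu\in M_h(X)$.
   Context: $M_h(X)$ denotes the set of $h$-invariant Borel probability measures on $X$; $\partial A$ is the boundary of $A$. A closed set $F\subset X$ is topologically $h$-small if there is $m\in\mathbb{Z}_{+}$ such that whenever $d(0),\dots,d(m)$ are $m+1$ distinct integers, $h^{d(0)}(F)\cap\cdots\cap h^{d(m)}(F)=\varnothing$. $(X,h)$ has the topological small boundary property if whenever $F,K\subset X$ are disjoint compact sets, there exist open sets $U,V\subset X$ with $F\subset U$, $K\subset V$, $\overline{U}\cap\overline{V}=\varnothing$ and $\partial U$ topologically $h$-small. *)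

theory Defs
  imports "HOL-Probability.Probability"
begin

text \<open>The space X is the whole (compact) metric type 'a. Integer powers of h.\<close>
definition hpow :: "('a \<Rightarrow> 'a) \<Rightarrow> int \<Rightarrow> 'a \<Rightarrow> 'a" where
  "hpow h d = (if d \<ge> 0 then h ^^ nat d else (inv h) ^^ nat (- d))"

definition top_small :: "('a::topological_space \<Rightarrow> 'a) \<Rightarrow> 'a set \<Rightarrow> bool" where
  "top_small h F \<longleftrightarrow> closed F \<and>
     (\<exists>m::nat. \<forall>D::int set. finite D \<and> card D = m + 1 \<longrightarrow> (\<Inter>d\<in>D. hpow h d ` F) = {})"

definition top_small_boundary_property :: "('a::topological_space \<Rightarrow> 'a) \<Rightarrow> bool" where
  "top_small_boundary_property h \<longleftrightarrow>
     (\<forall>F K. compact F \<and> compact K \<and> F \<inter> K = {} \<longrightarrow>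
        (\<exists>U V. open U \<and> open V \<and> F \<subseteq> U \<and> K \<subseteq> V \<and> closure U \<inter> closure V = {}
               \<and> top_small h (frontier U)))"

definition minimal_map :: "('a::topological_space \<Rightarrow> 'a) \<Rightarrow> bool" where
  "minimal_map h \<longleftrightarrow> (\<forall>A. closed A \<and> h ` A = A \<longrightarrow> A = {} \<or> A = UNIV)"

definition invariant_measures :: "('a::topological_space \<Rightarrow> 'a) \<Rightarrow> 'a measure set" where
  "invariant_measures h = {\<mu>. sets \<mu> = sets borel \<and> prob_space \<mu> \<and>
      (\<forall>A\<in>sets borel. emeasure \<mu> (h -` A) = emeasure \<mu> A)}"

end

theory Submission imports Defs begin

lemma cont_funpow: fixes h :: "'a::topological_space \<Rightarrow> 'a"
  shows "continuous_on UNIV h \<Longrightarrow> continuous_on UNIV (h ^^ k)"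
proof (induction k)
  case (Suc k)
  then show ?case using continuous_on_compose[of UNIV "h^^k" h] continuous_on_subset[of UNIV h] by (simp add: comp_def)
qed simp

lemma inv_iter:
  fixes h :: "'a \<Rightarrow> 'a"
  assumes "inj h" shows "(inv h ^^ k) ((h ^^ k) x) = x"
proof (induction k arbitrary: x)
  case (Suc k)
  have "(inv h ^^ Suc k) ((h ^^ Suc k) x) = inv h ((inv h ^^ k) ((h ^^ k) (h x)))"
  proof -
    have "(h ^^ Suc k) x = (h ^^ k) (h x)" by (simp add: funpow_Suc_right del: funpow.simps(2))
    moreover have "(inv h ^^ Suc k) y = inv h ((inv h ^^ k) y)" for y by simp
    ultimately show ?thesis by simp
  qed
  also have "\<dots> = x" using Suc assms by simp
  finally show ?case .
qed simp

lemma emeasure_iter: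
  assumes mu: "\<mu> \<in> invariant_measures h" and c: "continuous_on UNIV h" and A: "A \<in> sets borel"
  shows "emeasure \<mu> ((h ^^ k) -` A) = emeasure \<mu> A"
  using A
proof (induction k arbitrary: A)
  case (Suc k)
  have m: "h -` A \<in> sets borel"
    using measurable_sets[OF borel_measurable_continuous_onI[OF c] Suc.prems] by simp
  have "(h ^^ Suc k) -` A = (h ^^ k) -` (h -` A)"
    by (simp add: vimage_comp)
  then have "emeasure \<mu> ((h ^^ Suc k) -` A) = emeasure \<mu> (h -` A)" using Suc.IH[OF m] by simp
  then show ?case using mu Suc.prems unfolding invariant_measures_def by (simp add: comp_def)
qed simp

lemma sum_ind_le:
  fixes N m :: nat
  assumes "\<And>S. S \<subseteq> {..<N} \<Longrightarrow> card S = Suc m \<Longrightarrow> (\<Inter>k\<in>S. A k) = {}"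
  shows "(\<Sum>k<N. indicator (A k) x :: ennreal) \<le> of_nat m"
proof -
  let ?S = "{k\<in>{..<N}. x \<in> A k}"
  have eq: "(\<Sum>k<N. indicator (A k) x :: ennreal) = of_nat (card ?S)"
    proof -
    have "(\<Sum>k<N. indicator (A k) x :: ennreal) = (\<Sum>k<N. of_bool (x \<in> A k))"
      by (simp add: indicator_def)
    also have "\<dots> = of_nat (card ({..<N} \<inter> {k. x \<in> A k}))" by (rule sum_of_bool_eq[of "{..<N}" "\<lambda>k. x \<in> A k"]) simp_all
    also have "{..<N} \<inter> {k. x \<in> A k} = ?S" by auto
    finally show ?thesis .
  qed
  have "card ?S \<le> m"
  proof (rule ccontr)
    assume "\<not> card ?S \<le> m"
    then obtain T where T: "T \<subseteq> ?S" "card T = Suc m"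
      by (metis (no_types, lifting) not_less_eq_eq obtain_subset_with_card_n)
    then have "T \<subseteq> {..<N}" "x \<in> (\<Inter>k\<in>T. A k)" by auto
    with assms T show False by blast
  qed
  then show ?thesis unfolding eq by simp
qed

lemma measure_le:
  fixes h :: "'a::topological_space \<Rightarrow> 'a" and N m :: nat
  assumes mu: "\<mu> \<in> invariant_measures h" and c: "continuous_on UNIV h" and Qo: "open Q"
    and N: "N > 0"
    and sm: "\<And>S. S \<subseteq> {..<N} \<Longrightarrow> card S = Suc m \<Longrightarrow> (\<Inter>k\<in>S. (h ^^ k) -` Q) = {}"
  shows "measure \<mu> Q \<le> real m / real N"
proof -
  have sets: "sets \<mu> = sets borel" and ps: "prob_space \<mu>" using mu unfolding invariant_measures_def by auto
  have sp: "space \<mu> = UNIV" using sets_eq_imp_space_eq[OF sets] by simp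
  have Ob: "Q \<in> sets borel" using Qo by simp
  have Ok: "(h ^^ k) -` Q \<in> sets \<mu>" for k
    using measurable_sets[OF borel_measurable_continuous_onI[OF cont_funpow[OF c]] Ob] sets by simp
  have "of_nat N * emeasure \<mu> Q = (\<Sum>k<N. emeasure \<mu> ((h ^^ k) -` Q))"
    using emeasure_iter[OF mu c Ob] by simp
  also have "\<dots> = (\<Sum>k<N. \<integral>\<^sup>+ x. indicator ((h ^^ k) -` Q) x \<partial>\<mu>)"
    using Ok by simp
  also have "\<dots> = \<integral>\<^sup>+ x. (\<Sum>k<N. indicator ((h ^^ k) -` Q) x) \<partial>\<mu>"
    by (rule nn_integral_sum[symmetric]) (use Ok in auto)
  also have "\<dots> \<le> \<integral>\<^sup>+ x. of_nat m \<partial>\<mu>"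
    by (rule nn_integral_mono) (rule sum_ind_le[OF sm])
  also have "\<dots> = of_nat m" using prob_space.emeasure_space_1[OF ps] by simp
  finally have "ennreal (real N * measure \<mu> Q) \<le> ennreal (real m)"
    using finite_measure.emeasure_eq_measure[OF prob_space.finite_measure[OF ps]]
    by (simp add: ennreal_mult' ennreal_of_nat_eq_real_of_nat)
  then have "real N * measure \<mu> Q \<le> real m" by (simp add: ennreal_le_iff2) (auto)
  then show ?thesis using N by (simp add: field_simps)
qed

lemma nbhd:
  fixes h :: "'a::metric_space \<Rightarrow> 'a" and N m :: nat
  assumes cU: "compact (UNIV :: 'a set)" and c: "continuous_on UNIV h" and E: "closed E"
    and sm: "\<And>S. S \<subseteq> {..<N} \<Longrightarrow> card S = Suc m \<Longrightarrow> (\<Inter>k\<in>S. (h ^^ k) -` E) = {}"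
  shows "\<exists>Q. open Q \<and> E \<subseteq> Q \<and>
     (\<forall>S. S \<subseteq> {..<N} \<and> card S = Suc m \<longrightarrow> (\<Inter>k\<in>S. (h ^^ k) -` Q) = {})"
proof (cases "E = {}")
  case True
  show ?thesis
  proof (intro exI[of _ "{}"] conjI allI impI)
    fix S :: "nat set" assume "S \<subseteq> {..<N} \<and> card S = Suc m"
    then have "S \<noteq> {}" by auto
    then show "(\<Inter>k\<in>S. (h ^^ k) -` {}) = {}" by simp
  qed (use True in auto)
next
  case Ene: False
  define SS where "SS = {S. S \<subseteq> {..<N} \<and> card S = Suc m}"
  have finSS: "finite SS" unfolding SS_def
    by (rule finite_subset[of _ "Pow {..<N}"]) auto
  define \<psi> where "\<psi> S x = (\<Sum>k\<in>S. infdist ((h ^^ k) x) E)" for S x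
  have "\<forall>S\<in>SS. \<exists>d. d > 0 \<and> (\<forall>x. d \<le> \<psi> S x)"
  proof
    fix S assume S: "S \<in> SS"
    have finS: "finite S" using S unfolding SS_def by (auto intro: finite_subset)
    have "continuous_on UNIV (\<psi> S)" unfolding \<psi>_def
      by (intro continuous_on_sum continuous_on_infdist cont_funpow[OF c])
    then obtain x0 where x0: "\<forall>y. \<psi> S x0 \<le> \<psi> S y"
      using continuous_attains_inf[OF cU] by auto
    have "\<psi> S x0 > 0"
    proof (rule ccontr)
      assume "\<not> \<psi> S x0 > 0"
      moreover have "\<psi> S x0 \<ge> 0" unfolding \<psi>_def by (intro sum_nonneg infdist_nonneg)
      ultimately have "\<psi> S x0 = 0" by linarith
      then have "(\<Sum>k\<in>S. infdist ((h ^^ k) x0) E) = 0" unfolding \<psi>_def .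
      then have "\<forall>k\<in>S. infdist ((h ^^ k) x0) E = 0"
        by (subst (asm) sum_nonneg_eq_0_iff[OF finS]) (auto simp: infdist_nonneg)
      then have "\<forall>k\<in>S. (h ^^ k) x0 \<in> E"
        using in_closure_iff_infdist_zero[OF Ene] E by (simp add: closure_closed)
      then have "x0 \<in> (\<Inter>k\<in>S. (h ^^ k) -` E)" by auto
      with sm S show False unfolding SS_def by auto
    qed
    then show "\<exists>d. d > 0 \<and> (\<forall>x. d \<le> \<psi> S x)" by (intro exI[of _ "\<psi> S x0"]) (use x0 in auto)
  qed
  from finite_set_choice[OF finSS this] obtain f where f: "\<forall>S\<in>SS. f S > 0 \<and> (\<forall>x. f S \<le> \<psi> S x)"
    by blast
  define \<delta> where "\<delta> = Min (insert 1 (f ` SS))"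
  have dpos: "\<delta> > 0" unfolding \<delta>_def using finSS f by (subst Min_gr_iff) auto
  have dle: "\<delta> \<le> f S" if "S \<in> SS" for S unfolding \<delta>_def using finSS that by (intro Min_le) auto
  define Q where "Q = {y. infdist y E < \<delta> / real (Suc m)}"
  show ?thesis
  proof (intro exI[of _ Q] conjI allI impI)
    show "open Q" unfolding Q_def
      by (intro open_Collect_less continuous_on_infdist continuous_on_id continuous_on_const)
    show "E \<subseteq> Q" unfolding Q_def using dpos by auto
    fix S :: "nat set" assume S0: "S \<subseteq> {..<N} \<and> card S = Suc m"
    then have S: "S \<in> SS" unfolding SS_def by auto
    have finS: "finite S" "S \<noteq> {}" using S0 by (auto intro: finite_subset)
    show "(\<Inter>k\<in>S. (h ^^ k) -` Q) = {}"
    proof (rule ccontr)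
      assume "(\<Inter>k\<in>S. (h ^^ k) -` Q) \<noteq> {}"
      then obtain x where x: "\<forall>k\<in>S. infdist ((h ^^ k) x) E < \<delta> / real (Suc m)"
        unfolding Q_def by auto
      have "\<psi> S x < (\<Sum>k\<in>S. \<delta> / real (Suc m))" unfolding \<psi>_def
        using x finS by (intro sum_strict_mono) auto
      also have "\<dots> = \<delta>" using S0 by simp
      moreover have "f S \<le> \<psi> S x" using f S by auto
      ultimately show False using dle[OF S] by linarith
    qed
  qed
qed

lemma top_small_union:
  assumes A: "top_small h A" and B: "top_small h B" and C: "closed C" and sub: "C \<subseteq> A \<union> B"
  shows "top_small h C"
proof -
  obtain m1 where m1: "\<forall>D::int set. finite D \<and> card D = m1 + 1 \<longrightarrow> (\<Inter>d\<in>D. hpow h d ` A) = {}"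
    using A unfolding top_small_def by blast
  obtain m2 where m2: "\<forall>D::int set. finite D \<and> card D = m2 + 1 \<longrightarrow> (\<Inter>d\<in>D. hpow h d ` B) = {}"
    using B unfolding top_small_def by blast
  have "\<forall>D::int set. finite D \<and> card D = (m1 + m2) + 1 \<longrightarrow> (\<Inter>d\<in>D. hpow h d ` C) = {}"
  proof (intro allI impI)
    fix D :: "int set" assume D: "finite D \<and> card D = (m1 + m2) + 1"
    show "(\<Inter>d\<in>D. hpow h d ` C) = {}"
    proof (rule ccontr)
      assume "(\<Inter>d\<in>D. hpow h d ` C) \<noteq> {}"
      then obtain x where x: "\<forall>d\<in>D. x \<in> hpow h d ` C" by auto
      define D1 where "D1 = {d\<in>D. x \<in> hpow h d ` A}"
      define D2 where "D2 = {d\<in>D. x \<in> hpow h d ` B}"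
      have "D \<subseteq> D1 \<union> D2"
      proof
        fix d assume d: "d \<in> D"
        then obtain c where c: "c \<in> C" "x = hpow h d c" using x by blast
        then have "c \<in> A \<or> c \<in> B" using sub by blast
        then show "d \<in> D1 \<union> D2" using c d unfolding D1_def D2_def by blast
      qed
      moreover have f1: "finite D1" "finite D2" using D unfolding D1_def D2_def by auto
      ultimately have "card D \<le> card (D1 \<union> D2)" by (intro card_mono) auto
      also have "\<dots> \<le> card D1 + card D2" by (rule card_Un_le)
      finally have "card D \<le> card D1 + card D2" .
      then have "m1 + 1 \<le> card D1 \<or> m2 + 1 \<le> card D2" using D by linarith
      then show False
      proof
        assume "m1 + 1 \<le> card D1"
        then obtain T where T: "T \<subseteq> D1" "card T = m1 + 1" using obtain_subset_with_card_n by metis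
        have fT: "finite T" by (rule finite_subset[OF T(1) f1(1)])
        have "x \<in> (\<Inter>d\<in>T. hpow h d ` A)" using T unfolding D1_def by auto
        with m1 fT T show False by blast
      next
        assume "m2 + 1 \<le> card D2"
        then obtain T where T: "T \<subseteq> D2" "card T = m2 + 1" using obtain_subset_with_card_n by metis
        have fT: "finite T" by (rule finite_subset[OF T(1) f1(2)])
        have "x \<in> (\<Inter>d\<in>T. hpow h d ` B)" using T unfolding D2_def by auto
        with m2 fT T show False by blast
      qed
    qed
  qed
  then show ?thesis using C unfolding top_small_def by blast
qed

lemma hpow_neg: "hpow h (- int k) = inv h ^^ k"
  unfolding hpow_def by (cases "k = 0") auto

lemma top_small_iter:
  fixes h :: "'a::topological_space \<Rightarrow> 'a"
  assumes "top_small h E" and inj: "inj h"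
  shows "\<exists>m. \<forall>N S. S \<subseteq> {..<N} \<longrightarrow> card S = Suc m \<longrightarrow> (\<Inter>k\<in>S. (h ^^ k) -` E) = {}"
proof -
  obtain m where m: "\<forall>D::int set. finite D \<and> card D = m + 1 \<longrightarrow> (\<Inter>d\<in>D. hpow h d ` E) = {}"
    using assms unfolding top_small_def by blast
  show ?thesis
  proof (intro exI[of _ m] allI impI)
    fix N and S :: "nat set" assume S: "S \<subseteq> {..<N}" "card S = Suc m"
    define D where "D = (\<lambda>k. - int k) ` S"
    have fS: "finite S" by (rule finite_subset[OF S(1) finite_lessThan])
    have "inj_on (\<lambda>k::nat. - int k) S" by (auto simp: inj_on_def)
    then have cD: "card D = m + 1" using S unfolding D_def by (simp add: card_image)
    have fD: "finite D" using fS unfolding D_def by simp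
    have "(\<Inter>k\<in>S. (h ^^ k) -` E) \<subseteq> (\<Inter>d\<in>D. hpow h d ` E)"
    proof
      fix x assume x: "x \<in> (\<Inter>k\<in>S. (h ^^ k) -` E)"
      show "x \<in> (\<Inter>d\<in>D. hpow h d ` E)"
        unfolding D_def
      proof (clarsimp simp: hpow_neg)
        fix k assume "k \<in> S"
        then have "(h ^^ k) x \<in> E" using x by auto
        moreover have "(inv h ^^ k) ((h ^^ k) x) = x" by (rule inv_iter[OF inj])
        ultimately show "x \<in> (inv h ^^ k) ` E" by (metis image_eqI)
      qed
    qed
    moreover have "(\<Inter>d\<in>D. hpow h d ` E) = {}" using m fD cD by simp
    ultimately show "(\<Inter>k\<in>S. (h ^^ k) -` E) = {}" by (rule subset_antisym[OF _ empty_subsetI, unfolded \<open>(\<Inter>d\<in>D. hpow h d ` E) = {}\<close>] | auto)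
  qed
qed

theorem proposition4p9:
  fixes h :: "'a::metric_space \<Rightarrow> 'a" and \<epsilon> :: real
    and F U :: "'a set"
  assumes "compact (UNIV :: 'a set)"
    and "infinite (UNIV :: 'a set)"
    and "\<exists>g. homeomorphism UNIV UNIV h g"
    and "minimal_map h"
    and "top_small_boundary_property h"
    and "\<epsilon> > 0"
    and "closed F" and "open U" and "F \<subseteq> U"
  shows "\<exists>K V. closed K \<and> open V \<and>
           F \<subseteq> interior K \<and> interior K \<subseteq> K \<and> K \<subseteq> V \<and> V \<subseteq> closure V \<and> closure V \<subseteq> U \<and>
           top_small h (frontier K) \<and> top_small h (frontier V) \<and>
           (\<forall>\<mu>\<in>invariant_measures h. measure \<mu> (V - K) < \<epsilon>)"
proof -
  note cU = assms(1) and tsbp = assms(5) and eps = assms(6) and Fc = assms(7) and Uo = assms(8) and FU = assms(9)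
  obtain g where hg: "homeomorphism UNIV UNIV h g" using assms(3) by blast
  have c: "continuous_on UNIV h" using hg unfolding homeomorphism_def by simp
  have inj: "inj h"
  proof (rule inj_onI)
    fix x y assume "h x = h y"
    then have "g (h x) = g (h y)" by simp
    then show "x = y" using hg unfolding homeomorphism_def by simp
  qed
  have cpt: "compact S" if "closed S" for S :: "'a set"
    using compact_Int_closed[OF cU that] by simp
  have "compact F" "compact (- U)" "F \<inter> - U = {}" using cpt Fc Uo FU by auto
  then have "\<exists>W W2. open W \<and> open W2 \<and> F \<subseteq> W \<and> - U \<subseteq> W2 \<and> closure W \<inter> closure W2 = {}
      \<and> top_small h (frontier W)"
    using tsbp[unfolded top_small_boundary_property_def, rule_format, of F "- U"] by blast
  then obtain W W2 where W: "open W" "open W2" "F \<subseteq> W" "- U \<subseteq> W2" "closure W \<inter> closure W2 = {}"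
      "top_small h (frontier W)" by blast
  have clWU: "closure W \<subseteq> U"
  proof
    fix x assume x: "x \<in> closure W"
    show "x \<in> U"
    proof (rule ccontr)
      assume "x \<notin> U"
      then have "x \<in> closure W2" using W(4) closure_subset by blast
      with x W(5) show False by blast
    qed
  qed
  define E where "E = frontier W"
  have Ec: "closed E" unfolding E_def by simp
  have EW: "E = closure W - W" unfolding E_def frontier_def using interior_open[OF W(1)] by simp
  have EF: "E \<inter> F = {}" using EW W(3) by auto
  obtain m where m: "\<forall>N S. S \<subseteq> {..<N} \<longrightarrow> card S = Suc m \<longrightarrow> (\<Inter>k\<in>S. (h ^^ k) -` E) = {}"
    using top_small_iter[OF W(6)[folded E_def] inj] by blast
  obtain n :: nat where n: "real m / \<epsilon> < real n" using reals_Archimedean2 by blast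
  define N where "N = Suc n"
  have Npos: "N > 0" unfolding N_def by simp
  have mN: "real m / real N < \<epsilon>"
  proof -
    have "real m / \<epsilon> < real N" using n unfolding N_def by simp
    then have "real m < \<epsilon> * real N" using eps by (simp add: divide_less_eq mult.commute)
    then show ?thesis using Npos by (simp add: divide_less_eq mult.commute)
  qed
  have ex: "\<exists>Q. open Q \<and> E \<subseteq> Q \<and>
     (\<forall>S. S \<subseteq> {..<N} \<and> card S = Suc m \<longrightarrow> (\<Inter>k\<in>S. (h ^^ k) -` Q) = {})"
    by (rule nbhd[OF cU c Ec]) (rule m[rule_format])
  then obtain Q0 where Q0: "open Q0" "E \<subseteq> Q0"
     "\<forall>S. S \<subseteq> {..<N} \<and> card S = Suc m \<longrightarrow> (\<Inter>k\<in>S. (h ^^ k) -` Q0) = {}"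
    by (elim exE conjE)
  have measQ0: "measure \<mu> Q0 < \<epsilon>" if mu: "\<mu> \<in> invariant_measures h" for \<mu>
  proof -
    have "measure \<mu> Q0 \<le> real m / real N"
      by (rule measure_le[OF mu c Q0(1) Npos]) (use Q0(3) in simp)
    then show ?thesis using mN by linarith
  qed
  define O' where "O' = Q0 - F"
  have O': "open O'" "E \<subseteq> O'" "O' \<subseteq> Q0" "O' \<inter> F = {}"
    unfolding O'_def using Q0 Fc EF by auto
  have "compact E" "compact (- O')" "E \<inter> - O' = {}" using cpt Ec O' by auto
  then have "\<exists>P P2. open P \<and> open P2 \<and> E \<subseteq> P \<and> - O' \<subseteq> P2 \<and> closure P \<inter> closure P2 = {}
      \<and> top_small h (frontier P)"
    using tsbp[unfolded top_small_boundary_property_def, rule_format, of E "- O'"] by blast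
  then obtain P P2 where P: "open P" "open P2" "E \<subseteq> P" "- O' \<subseteq> P2" "closure P \<inter> closure P2 = {}"
      "top_small h (frontier P)" by blast
  have clPO: "closure P \<subseteq> O'"
  proof
    fix x assume x: "x \<in> closure P"
    show "x \<in> O'"
    proof (rule ccontr)
      assume "x \<notin> O'"
      then have "x \<in> closure P2" using P(4) closure_subset by blast
      with x P(5) show False by blast
    qed
  qed
  define K where "K = closure W - P"
  show ?thesis
  proof (rule exI[of _ K], rule exI[of _ W], intro conjI ballI)
    show "closed K" unfolding K_def using P(1) by (intro closed_Diff) auto
    show "open W" by (rule W(1))
    have "W - closure P \<subseteq> K" unfolding K_def using closure_subset by fastforce
    moreover have "open (W - closure P)" using W(1) by (intro open_Diff) auto
    moreover have "F \<subseteq> W - closure P" using W(3) clPO O'(4) by blast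
    ultimately show "F \<subseteq> interior K" by (meson interior_maximal subset_trans)
    show "interior K \<subseteq> K" by (rule interior_subset)
    show "K \<subseteq> W" unfolding K_def using EW P(3) by blast
    show "W \<subseteq> closure W" by (rule closure_subset)
    show "closure W \<subseteq> U" by (rule clWU)
    show "top_small h (frontier W)" by (rule W(6))
    have "frontier K \<subseteq> frontier W \<union> frontier P"
    proof -
      have "K = closure W \<inter> - P" unfolding K_def by blast
      then have "frontier K \<subseteq> frontier (closure W) \<union> frontier (- P)"
        using frontier_Int[of "closure W" "- P"] by blast
      moreover have "frontier (closure W) \<subseteq> frontier W"
        unfolding frontier_def using interior_mono[OF closure_subset[of W]] by auto
      ultimately show ?thesis by auto
    qed
    then show "top_small h (frontier K)" using top_small_union[OF W(6) P(6)] by simp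
    fix \<mu> assume mu: "\<mu> \<in> invariant_measures h"
    have sets: "sets \<mu> = sets borel" and ps: "prob_space \<mu>" using mu unfolding invariant_measures_def by auto
    have "W - K \<subseteq> Q0" unfolding K_def using closure_subset[of W] closure_subset[of P] clPO O'(3) by blast
    moreover have "Q0 \<in> sets \<mu>" using sets Q0(1) by simp
    ultimately have "measure \<mu> (W - K) \<le> measure \<mu> Q0"
      by (rule finite_measure.finite_measure_mono[OF prob_space.finite_measure[OF ps]])
    then show "measure \<mu> (W - K) < \<epsilon>" using measQ0[OF mu] by linarith
  qed
qed

end
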